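(* Let $K$ be a field of characteristic zero, $\mathfrak{g}$ a finite-dimensional Lie algebra over $K$, $\mathfrak{g}_1$ an ideal of codimension one in $\mathfrak{g}$, and $f,f'\in\mathfrak{g}^*$ with restrictions $f_1=f|_{\mathfrak{g}_1}$, $f'_1=f'|_{\mathfrak{g}_1}$. Let $\mathfrak{p}_1$ be a subalgebra of $\mathfrak{g}_1$ that is a polarization of both $f_1$ and $f'_1$ in $\mathfrak{g}_1$, and suppose $f|_{\mathfrak{p}_1}=f'|_{\mathfrak{p}_1}$. Let $\mathfrak{p}$ be a polarization of $f$ and $\mathfrak{p}'$ a polarization of $f'$ in $\mathfrak{g}$ such that $\mathfrak{p}\cap\mathfrak{g}_1=\mathfrak{p}'\cap\mathfrak{g}_1=\mathfrak{p}_1$. Then $\mathfrak{p}=\mathfrak{p}'$.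
   Context: For a Lie algebra $\mathfrak{a}$ and $\varphi\in\mathfrak{a}^*$, a polarization of $\varphi$ in $\mathfrak{a}$ is a Lie subalgebra $\mathfrak{p}\subseteq\mathfrak{a}$ with $\varphi([\mathfrak{p},\mathfrak{p}])=0$ and $\dim\mathfrak{p}=\frac12(\dim\mathfrak{a}+\dim\mathfrak{a}^{\varphi})$, where $\mathfrak{a}^\varphi=\{x\in\mathfrak{a}\mid \varphi([x,\mathfrak{a}])=0\}$. *)

theory Defs
  imports Complex_Main
begin

definition lie_algebra ::
  "('k::field \<Rightarrow> 'v::ab_group_add \<Rightarrow> 'v) \<Rightarrow> ('v \<Rightarrow> 'v \<Rightarrow> 'v) \<Rightarrow> bool" where
  "lie_algebra scale br \<longleftrightarrow>
     vector_space scale \<and>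
     (\<forall>x. Vector_Spaces.linear scale scale (br x)) \<and>
     (\<forall>y. Vector_Spaces.linear scale scale (\<lambda>x. br x y)) \<and>
     (\<forall>x. br x x = 0) \<and>
     (\<forall>x y z. br x (br y z) + br y (br z x) + br z (br x y) = 0)"

definition lie_subalgebra ::
  "('k::field \<Rightarrow> 'v::ab_group_add \<Rightarrow> 'v) \<Rightarrow> ('v \<Rightarrow> 'v \<Rightarrow> 'v) \<Rightarrow> 'v set \<Rightarrow> bool" where
  "lie_subalgebra scale br S \<longleftrightarrow>
     module.subspace scale S \<and> (\<forall>x\<in>S. \<forall>y\<in>S. br x y \<in> S)"

definition lie_ideal ::
  "('k::field \<Rightarrow> 'v::ab_group_add \<Rightarrow> 'v) \<Rightarrow> ('v \<Rightarrow> 'v \<Rightarrow> 'v) \<Rightarrow> 'v set \<Rightarrow> 'v set \<Rightarrow> bool" where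
  "lie_ideal scale br I A \<longleftrightarrow>
     module.subspace scale I \<and> I \<subseteq> A \<and> (\<forall>x\<in>A. \<forall>y\<in>I. br x y \<in> I)"

definition stabilizer ::
  "('v \<Rightarrow> 'v \<Rightarrow> 'v) \<Rightarrow> ('v \<Rightarrow> 'k::zero) \<Rightarrow> 'v set \<Rightarrow> 'v set" where
  "stabilizer br \<phi> A = {x \<in> A. \<forall>y\<in>A. \<phi> (br x y) = 0}"

definition polarization ::
  "('k::field \<Rightarrow> 'v::ab_group_add \<Rightarrow> 'v) \<Rightarrow> ('v \<Rightarrow> 'v \<Rightarrow> 'v) \<Rightarrow> ('v \<Rightarrow> 'k) \<Rightarrow> 'v set \<Rightarrow> 'v set \<Rightarrow> bool" where
  "polarization scale br \<phi> A P \<longleftrightarrow>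
     lie_subalgebra scale br P \<and> P \<subseteq> A \<and>
     (\<forall>x\<in>P. \<forall>y\<in>P. \<phi> (br x y) = 0) \<and>
     2 * vector_space.dim scale P = vector_space.dim scale A + vector_space.dim scale (stabilizer br \<phi> A)"

end

theory Submission
  imports Defs
begin

locale bform = vector_space scale
  for scale :: "'a::field \<Rightarrow> 'b::ab_group_add \<Rightarrow> 'b" (infixr \<open>*s\<close> 75) +
  fixes b :: "'b \<Rightarrow> 'b \<Rightarrow> 'a"
  assumes ladd: "\<And>x y z. b (x + y) z = b x z + b y z"
    and lsc: "\<And>c x y. b (c *s x) y = c * b x y"
    and radd: "\<And>x y z. b z (x + y) = b z x + b z y"
    and rsc: "\<And>c x y. b y (c *s x) = c * b y x"
    and alt: "\<And>x. b x x = 0"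
begin

lemma l0[simp]: "b 0 y = 0"
  using lsc[of 0 0 y] by simp
lemma r0[simp]: "b y 0 = 0"
  using rsc[where c=0 and x=0 and y=y] by simp
lemma lneg: "b (- x) y = - b x y"
  using lsc[of "-1" x y] by (simp add: scale_minus_left)
lemma rneg: "b y (- x) = - b y x"
  using rsc[where c="-1" and x=x and y=y] by (simp add: scale_minus_left)
lemma ldiff: "b (x - z) y = b x y - b z y"
  using ladd[where x=x and y="-z" and z=y] lneg[of z y] by simp
lemma rdiff: "b y (x - z) = b y x - b y z"
  using radd[where x=x and y="-z" and z=y] rneg[of y z] by simp
lemma skew: "b x y = - b y x"
proof -
  have "b (x+y) (x+y) = b x x + b x y + (b y x + b y y)" by (simp only: ladd radd ac_simps)
  then have "b x y + b y x = 0" by (simp add: alt)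
  then show ?thesis by (simp add: eq_neg_iff_add_eq_0)
qed

lemma iso_span1:
  assumes iso: "\<forall>x\<in>S. \<forall>y\<in>S. b x y = 0" and x: "x \<in> S" and y: "y \<in> span S"
  shows "b x y = 0"
  using y
proof (induction rule: span_induct_alt)
  case base then show ?case by simp
next
  case (step c u v) then show ?case using iso x by (simp add: radd rsc)
qed

lemma iso_span:
  assumes iso: "\<forall>x\<in>S. \<forall>y\<in>S. b x y = 0" and x: "x \<in> span S" and y: "y \<in> span S"
  shows "b x y = 0"
  using x
proof (induction rule: span_induct_alt)
  case base then show ?case by simp
next
  case (step c u v) then show ?case using iso_span1[OF iso _ y] by (simp add: ladd lsc)
qed

end

locale fbform = bform scale b + finite_dimensional_vector_space scale Basis
  for scale :: "'a::field \<Rightarrow> 'b::ab_group_add \<Rightarrow> 'b" (infixr \<open>*s\<close> 75)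
  and b and Basis
begin

lemma iso_bound:
  "subspace A \<Longrightarrow> subspace U \<Longrightarrow> U \<subseteq> A \<Longrightarrow> (\<forall>x\<in>U. \<forall>y\<in>U. b x y = 0) \<Longrightarrow>
   2 * dim U \<le> dim A + dim {x\<in>A. \<forall>y\<in>A. b x y = 0}"
proof (induction "dim A" arbitrary: A U rule: less_induct)
  case less
  define R where "R = {x\<in>A. \<forall>y\<in>A. b x y = 0}"
  show ?case
  proof (cases "U \<subseteq> R")
    case True
    then have "dim U \<le> dim R" by (rule dim_subset)
    moreover have "dim R \<le> dim A" by (rule dim_subset) (auto simp: R_def)
    ultimately show ?thesis unfolding R_def[symmetric] by simp
  next
    case False
    then obtain e where eU: "e \<in> U" and eR: "e \<notin> R" by auto
    have eA: "e \<in> A" using eU less.prems by auto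
    then obtain g0 where g0A: "g0 \<in> A" and g0: "b e g0 \<noteq> 0" using eR by (auto simp: R_def)
    define g where "g = inverse (b e g0) *s g0"
    have gA: "g \<in> A" unfolding g_def using g0A less.prems(1) by (rule subspace_scale[rotated])
    have beg: "b e g = 1" unfolding g_def using g0 by (simp add: rsc)
    have bge: "b g e = -1" using skew[of g e] beg by simp
    define A' where "A' = {x\<in>A. b x e = 0 \<and> b x g = 0}"
    have subA': "subspace A'"
      unfolding A'_def subspace_def using less.prems(1)
      by (auto simp: subspace_0 subspace_add subspace_scale ladd lsc)
    have A'A: "A' \<subseteq> A" by (auto simp: A'_def)
    have spA': "span A' = A'" using subA' by simp
    have g_notin: "g \<notin> span A'" unfolding spA' using bge by (auto simp: A'_def)
    have e_notin: "e \<notin> span (insert g A')"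
    proof
      assume "e \<in> span (insert g A')"
      then obtain k where "e - k *s g \<in> span A'" by (auto simp: span_insert)
      then have "e - k *s g \<in> A'" using spA' by simp
      then have "b (e - k *s g) g = 0" by (auto simp: A'_def)
      then show False using beg by (simp add: ldiff lsc alt)
    qed
    have "dim (insert e (insert g A')) = dim A' + 2"
      using g_notin e_notin by (simp add: dim_insert)
    moreover have "dim (insert e (insert g A')) \<le> dim A"
      by (rule dim_subset) (use eA gA A'A in auto)
    ultimately have dA: "dim A' + 2 \<le> dim A" by simp
    define U' where "U' = {x\<in>U. b x g = 0}"
    have subU': "subspace U'"
      unfolding U'_def subspace_def using less.prems(2)
      by (auto simp: subspace_0 subspace_add subspace_scale ladd lsc)
    have U'A': "U' \<subseteq> A'" using less.prems(3,4) eU by (auto simp: U'_def A'_def)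
    have isoU': "\<forall>x\<in>U'. \<forall>y\<in>U'. b x y = 0" using less.prems(4) by (auto simp: U'_def)
    have IH: "2 * dim U' \<le> dim A' + dim {x\<in>A'. \<forall>y\<in>A'. b x y = 0}"
      using less.hyps[of A' U'] dA subA' subU' U'A' isoU' by simp
    have "U \<subseteq> span (insert e U')"
    proof
      fix u assume uU: "u \<in> U"
      have "u - b u g *s e \<in> U'"
        unfolding U'_def using uU eU less.prems(2) beg
        by (auto simp: subspace_diff subspace_scale ldiff lsc)
      then show "u \<in> span (insert e U')" by (auto simp: span_insert intro: span_base)
    qed
    then have "dim U \<le> dim (insert e U')" by (rule dim_mono)
    also have "\<dots> \<le> dim U' + 1" by (simp add: dim_insert)
    finally have dU: "dim U \<le> dim U' + 1" .
    have "{x\<in>A'. \<forall>y\<in>A'. b x y = 0} \<subseteq> R"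
    proof
      fix x assume x: "x \<in> {x\<in>A'. \<forall>y\<in>A'. b x y = 0}"
      have "b x y = 0" if yA: "y \<in> A" for y
      proof -
        define y' where "y' = y - b y g *s e + b y e *s g"
        have y'A: "y' \<in> A" unfolding y'_def using yA eA gA less.prems(1)
          by (intro subspace_add subspace_diff subspace_scale) auto
        have "b y' e = 0" unfolding y'_def using bge by (simp add: ladd ldiff lsc alt)
        moreover have "b y' g = 0" unfolding y'_def using beg by (simp add: ladd ldiff lsc alt)
        ultimately have "y' \<in> A'" using y'A by (simp add: A'_def)
        then have "b x y' = 0" using x by auto
        moreover have "b x e = 0" "b x g = 0" using x by (auto simp: A'_def)
        ultimately show ?thesis unfolding y'_def by (simp add: radd rdiff rsc)
      qed
      then show "x \<in> R" using x A'A by (auto simp: R_def)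
    qed
    then have "dim {x\<in>A'. \<forall>y\<in>A'. b x y = 0} \<le> dim R" by (rule dim_subset)
    then show ?thesis using IH dA dU unfolding R_def by simp
  qed
qed

end

lemma lie_facts:
  assumes lie: "lie_algebra scale br"
  shows "vector_space scale"
    and "\<And>x y z. br (x + y) z = br x z + br y z"
    and "\<And>c x y. br (scale c x) y = scale c (br x y)"
    and "\<And>x y z. br z (x + y) = br z x + br z y"
    and "\<And>c x y. br y (scale c x) = scale c (br y x)"
    and "\<And>x. br x x = 0"
proof -
  have l1: "Vector_Spaces.linear scale scale (br x)" for x using lie unfolding lie_algebra_def by auto
  have l2: "Vector_Spaces.linear scale scale (\<lambda>x. br x y)" for y using lie unfolding lie_algebra_def by auto
  show "vector_space scale" "\<And>x. br x x = 0" using lie unfolding lie_algebra_def by auto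
  show "\<And>x y z. br (x + y) z = br x z + br y z" "\<And>c x y. br (scale c x) y = scale c (br x y)"
    using l2 unfolding Vector_Spaces.linear_iff by auto
  show "\<And>x y z. br z (x + y) = br z x + br z y" "\<And>c x y. br y (scale c x) = scale c (br y x)"
    using l1 unfolding Vector_Spaces.linear_iff by auto
qed

lemma lin_facts:
  assumes "Vector_Spaces.linear scale (*) f"
  shows "\<And>x y. f (x + y) = f x + f y" and "\<And>c x. f (scale c x) = c * f x" and "f 0 = 0"
proof -
  show a: "\<And>x y. f (x + y) = f x + f y" and "\<And>c x. f (scale c x) = c * f x"
    using assms unfolding Vector_Spaces.linear_iff by auto
  show "f 0 = 0" using a[of 0 0] by (metis add.right_neutral add_left_cancel)
qed

lemma bform_of:
  fixes scale :: "'k::field \<Rightarrow> 'v::ab_group_add \<Rightarrow> 'v"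
  assumes lie: "lie_algebra scale br" and lin: "Vector_Spaces.linear scale (*) \<phi>"
  shows "bform scale (\<lambda>x y. \<phi> (br x y))"
proof -
  note L = lie_facts[OF lie] and F = lin_facts[OF lin]
  show ?thesis
    unfolding bform_def bform_axioms_def
    using L F by (simp add: algebra_simps)
qed

lemma pol_bound:
  fixes scale :: "'k::field \<Rightarrow> 'v::ab_group_add \<Rightarrow> 'v"
  assumes lie: "lie_algebra scale br" and fin: "finite_dimensional_vector_space scale B"
    and lin: "Vector_Spaces.linear scale (*) \<phi>"
    and A: "module.subspace scale A" and U: "module.subspace scale U" and UA: "U \<subseteq> A"
    and iso: "\<forall>x\<in>U. \<forall>y\<in>U. \<phi> (br x y) = 0"
  shows "2 * vector_space.dim scale U \<le> vector_space.dim scale A + vector_space.dim scale (stabilizer br \<phi> A)"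
proof -
  have "fbform scale (\<lambda>x y. \<phi> (br x y)) B"
    using bform_of[OF lie lin] fin unfolding fbform_def by simp
  then interpret fbform scale "\<lambda>x y. \<phi> (br x y)" B .
  show ?thesis using iso_bound[OF A U UA iso] by (simp add: stabilizer_def)
qed

lemma incl:
  fixes scale :: "'k::field \<Rightarrow> 'v::ab_group_add \<Rightarrow> 'v"
  assumes lie: "lie_algebra scale br"
    and fin: "finite_dimensional_vector_space scale B"
    and ideal: "lie_ideal scale br g1 UNIV"
    and codim: "vector_space.dim scale g1 + 1 = vector_space.dim scale (UNIV :: 'v set)"
    and f_lin: "Vector_Spaces.linear scale (*) f"
    and f'_lin: "Vector_Spaces.linear scale (*) f'"
    and p1_pol': "polarization scale br f' g1 p1"
    and agree: "\<forall>x\<in>p1. f x = f' x"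
    and p_pol: "polarization scale br f UNIV p"
    and p'_pol: "polarization scale br f' UNIV p'"
    and p_int: "p \<inter> g1 = p1"
    and p'_int: "p' \<inter> g1 = p1"
  shows "p \<subseteq> p'"
proof
  interpret V: finite_dimensional_vector_space scale B by (rule fin)
  interpret B': bform scale "\<lambda>x y. f' (br x y)" by (rule bform_of[OF lie f'_lin])
  note L = lie_facts[OF lie] and F = lin_facts[OF f_lin] and F' = lin_facts[OF f'_lin]
  have g1s: "V.subspace g1" using ideal by (simp add: lie_ideal_def)
  have idl: "\<And>x y. y \<in> g1 \<Longrightarrow> br x y \<in> g1" using ideal by (simp add: lie_ideal_def)
  have ps: "V.subspace p" "\<And>x y. x\<in>p \<Longrightarrow> y\<in>p \<Longrightarrow> br x y \<in> p"
    "\<And>x y. x\<in>p \<Longrightarrow> y\<in>p \<Longrightarrow> f (br x y) = 0"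
    using p_pol unfolding polarization_def lie_subalgebra_def by auto
  have p's: "V.subspace p'" "\<And>x y. x\<in>p' \<Longrightarrow> y\<in>p' \<Longrightarrow> f' (br x y) = 0"
    and dp': "2 * V.dim p' = V.dim UNIV + V.dim (stabilizer br f' UNIV)"
    using p'_pol unfolding polarization_def lie_subalgebra_def by auto
  have p1s: "V.subspace p1" "\<And>x y. x\<in>p1 \<Longrightarrow> y\<in>p1 \<Longrightarrow> f' (br x y) = 0" "p1 \<subseteq> g1"
    and dp1: "2 * V.dim p1 = V.dim g1 + V.dim (stabilizer br f' g1)"
    using p1_pol' unfolding polarization_def lie_subalgebra_def by auto
  have br0: "br y 0 = 0" for y using L(5)[of y 0 0] by simp
  have brneg: "br y (- z) = - br y z" for y z
    using L(4)[of y "-z" z] br0[of y] by (simp add: eq_neg_iff_add_eq_0)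
  have brdiff: "br y (u - z) = br y u - br y z" for y u z
    using L(4)[of y u "-z"] brneg[of y z] by simp
  have skew: "br x y = - br y x" for x y
  proof -
    have "br (x+y) (x+y) = br x x + br x y + (br y x + br y y)" by (simp only: L(2,4) ac_simps)
    then have "br x y + br y x = 0" by (simp add: L(6))
    then show ?thesis by (simp add: eq_neg_iff_add_eq_0)
  qed
  have spg1: "V.span g1 = g1" using g1s by simp
  have codim1: "\<exists>c. y - scale c x \<in> g1" if x: "x \<notin> g1" for x y
  proof -
    have "V.dim (insert x g1) = V.dim g1 + 1" using x by (simp add: V.dim_insert spg1)
    then have "V.dim (insert x g1) = V.dimension" using codim V.dim_UNIV V.dimension_def by simp
    then have "V.span (insert x g1) = UNIV" using V.dim_eq_full by blast
    then have "y \<in> V.span (insert x g1)" by simp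
    then show ?thesis using spg1 by (auto simp: V.span_insert)
  qed
  have brg1: "br x y \<in> g1" for x y
  proof (cases "y \<in> g1")
    case True then show ?thesis by (rule idl)
  next
    case False
    then obtain c where "x - scale c y \<in> g1" using codim1 by blast
    then have "br y (x - scale c y) \<in> g1" by (rule idl)
    moreover have "br y (x - scale c y) = br y x" by (simp add: brdiff L(5,6))
    ultimately have "br y x \<in> g1" by simp
    then show ?thesis using skew[of x y] g1s by (simp add: V.subspace_neg)
  qed
  fix x assume xp: "x \<in> p"
  show "x \<in> p'"
  proof (cases "x \<in> g1")
    case True then show ?thesis using xp p_int p'_int by auto
  next
    case xg: False
    show ?thesis
    proof (cases "p' \<subseteq> g1")
      case True
      then have p'eq: "p' = p1" using p'_int by auto
      have p1p: "p1 \<subseteq> p" using p_int by auto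
      have isop: "\<forall>u\<in>p. \<forall>v\<in>p. f' (br u v) = 0"
      proof (intro ballI)
        fix u v assume "u \<in> p" "v \<in> p"
        then have "br u v \<in> p1" using ps(2) brg1 p_int by auto
        then show "f' (br u v) = 0" using agree ps(3) \<open>u \<in> p\<close> \<open>v \<in> p\<close> by metis
      qed
      have bnd: "2 * V.dim p \<le> V.dim UNIV + V.dim (stabilizer br f' UNIV)"
        by (rule pol_bound[OF lie fin f'_lin V.subspace_UNIV ps(1) subset_UNIV isop])
      have spp': "V.span p' = p'" using p's(1) by simp
      have "x \<notin> V.span p'" unfolding spp' using True xg by auto
      then have "V.dim (insert x p') = V.dim p' + 1" by (simp add: V.dim_insert)
      moreover have "V.dim (insert x p') \<le> V.dim p" by (rule V.dim_subset) (use xp p'eq p1p in auto)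
      ultimately show ?thesis using bnd dp' by simp
    next
      case False
      then obtain a where ap: "a \<in> p'" "a \<notin> g1" by auto
      obtain c where dg: "a - scale c x \<in> g1" using codim1[OF xg] by blast
      define d where "d = a - scale c x"
      have d_orth: "f' (br d y) = 0" if y: "y \<in> p1" for y
      proof -
        have "br x y \<in> p1" using ps(2)[OF xp] y p_int brg1 by auto
        then have "f' (br x y) = 0" using agree ps(3)[OF xp] y p_int by force
        moreover have "f' (br a y) = 0" using p's(2)[OF ap(1)] y p'_int by auto
        ultimately show ?thesis unfolding d_def using B'.ldiff B'.lsc by simp
      qed
      define S where "S = insert d p1"
      have isoS: "\<forall>u\<in>S. \<forall>v\<in>S. f' (br u v) = 0"
      proof (intro ballI)
        fix u v assume u: "u \<in> S" and v: "v \<in> S"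
        show "f' (br u v) = 0"
        proof (cases "u = d")
          case True
          then show ?thesis using v d_orth B'.alt unfolding S_def by auto
        next
          case False
          then have "u \<in> p1" using u unfolding S_def by auto
          moreover have "f' (br u d) = 0" using d_orth[OF \<open>u \<in> p1\<close>] B'.skew[of u d] by simp
          ultimately show ?thesis using v p1s(2) unfolding S_def by auto
        qed
      qed
      have Sg1: "V.span S \<subseteq> g1"
        using V.span_minimal[OF _ g1s, of S] dg p1s(3) unfolding S_def d_def by auto
      have isoSS: "\<forall>u\<in>V.span S. \<forall>v\<in>V.span S. f' (br u v) = 0"
        using B'.iso_span[OF isoS] by blast
      have "2 * V.dim (V.span S) \<le> V.dim g1 + V.dim (stabilizer br f' g1)"
        by (rule pol_bound[OF lie fin f'_lin g1s V.subspace_span Sg1 isoSS])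
      then have dS: "V.dim S \<le> V.dim p1" using dp1 by simp
      have dp1': "d \<in> p1"
      proof (rule ccontr)
        assume "d \<notin> p1"
        have spp1: "V.span p1 = p1" using p1s(1) by simp
        have "d \<notin> V.span p1" unfolding spp1 by fact
        then have "V.dim S = V.dim p1 + 1" unfolding S_def by (simp add: V.dim_insert)
        then show False using dS by simp
      qed
      then have "d \<in> p'" using p'_int by auto
      then have cx: "scale c x \<in> p'" using V.subspace_diff[OF p's(1) ap(1) \<open>d \<in> p'\<close>]
        unfolding d_def by simp
      have "c \<noteq> 0"
      proof
        assume "c = 0"
        then show False using dg ap(2) by simp
      qed
      then have "x = scale (inverse c) (scale c x)" by simp
      also have "\<dots> \<in> p'" by (rule V.subspace_scale[OF p's(1) cx])
      finally show ?thesis .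
    qed
  qed
qed

theorem lemma3p6:
  fixes scale :: "'k::field_char_0 \<Rightarrow> 'v::ab_group_add \<Rightarrow> 'v"
    and br :: "'v \<Rightarrow> 'v \<Rightarrow> 'v"
    and B g1 p1 p p' :: "'v set"
    and f f' :: "'v \<Rightarrow> 'k"
  assumes lie: "lie_algebra scale br"
    and fin: "finite_dimensional_vector_space scale B"
    and ideal: "lie_ideal scale br g1 UNIV"
    and codim: "vector_space.dim scale g1 + 1 = vector_space.dim scale (UNIV :: 'v set)"
    and f_lin: "Vector_Spaces.linear scale (*) f"
    and f'_lin: "Vector_Spaces.linear scale (*) f'"
    and p1_sub: "lie_subalgebra scale br p1" "p1 \<subseteq> g1"
    and p1_pol: "polarization scale br f g1 p1"
    and p1_pol': "polarization scale br f' g1 p1"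
    and agree: "\<forall>x\<in>p1. f x = f' x"
    and p_pol: "polarization scale br f UNIV p"
    and p'_pol: "polarization scale br f' UNIV p'"
    and p_int: "p \<inter> g1 = p1"
    and p'_int: "p' \<inter> g1 = p1"
  shows "p = p'"
proof
  show "p \<subseteq> p'"
    by (rule incl[OF lie fin ideal codim f_lin f'_lin p1_pol' agree p_pol p'_pol p_int p'_int])
  have agree': "\<forall>x\<in>p1. f' x = f x" using agree by simp
  show "p' \<subseteq> p"
    by (rule incl[OF lie fin ideal codim f'_lin f_lin p1_pol agree' p'_pol p_pol p'_int p_int])
qed

end
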